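(* Let $q>1$, $0\le M_0<M$, let $u$ be a sufficiently smooth $L$-periodic solution of $u_t=-\alpha uu_x+\beta u_{xxx}$ on $[0,T]\times\mathbb{R}$, $r>\sup_{t,x}|u(t,x)|$. Assume $u^{(0)}_k=u(0,k\Delta x)$, that $u^{(0)},\dots,u^{(M_0+1)}$ are obtained successively as solutions of the scheme, that $\|u^{(m)}\|_\infty\le r$ for $m\le M_0$, that $\Delta t<\min\{\varepsilon_1(q,r,\Delta x),\varepsilon_2(q,r,\Delta x)\}$, and that $\|u^{(M_0+1)}\|_\infty\le qr$. Let $c_0>0$ be a constant independent of $\Delta t,\Delta x$ with $\|\tau^{(m)}\|,\|\delta^+_x\tau^{(m)}\|\le c_0((\Delta t)^2+(\Delta x)^2)$ for $m=0,\dots,M_0$. Then for $m=0,\dots,M_0$, $$\delta^+_t\|e^{(m)}\|^2\le C_1\,\mu^+_t\|e^{(m)}\|_{H^1}^2 + c_0^2\big((\Delta t)^2+(\Delta x)^2\big)^2,$$ where $C_1=C_1(q,r)=\max\{3|\alpha|(2q^2+1)r^2+1,\ |\alpha|/2\}$.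
   Context: $L>0$, $K\in\mathbb{N}$, $\Delta x=L/K$; $T>0$, $M\in\mathbb{N}$, $\Delta t=T/M$; $\alpha\in\mathbb{R}$, $\beta\ne0$. Grid functions are $K$-periodic real sequences. $\delta^+_x v_k=(v_{k+1}-v_k)/\Delta x$, $\delta^{\langle 1\rangle}_x v_k = (v_{k+1}-v_{k-1})/(2\Delta x)$, $\delta^{\langle 2\rangle}_x v_k = (v_{k+1}-2v_k+v_{k-1})/(\Delta x)^2$, $\|v\|=(\sum_{k=1}^K v_k^2\Delta x)^{1/2}$, $\|v\|_\infty=\max_k|v_k|$, $\|v\|_{H^1}=(\|v\|^2+\|\delta^+_xv\|^2)^{1/2}$; $\delta^+_t v^{(n)}=(v^{(n+1)}-v^{(n)})/\Delta t$, $\mu^+_t v^{(n)}=(v^{(n+1)}+v^{(n)})/2$ (so e.g. $\mu^+_t\|e^{(m)}\|^2=(\|e^{(m+1)}\|^2+\|e^{(m)}\|^2)/2$). The scheme: $u^{(n+1)}$ solves it at step $n$ if $\delta^+_t u^{(n)}_k = -\frac{\alpha}{6}\delta^{\langle 1\rangle}_x\{(u^{(n+1)}_k)^2 + u^{(n+1)}_k u^{(n)}_k + (u^{(n)}_k)^2\} + \beta\delta^{\langle 1\rangle}_x\delta^{\langle 2\rangle}_x \mu^+_t u^{(n)}_k$ for all $k$. $\varepsilon_1(q,r,\Delta x) = (q-1)(\Delta x)^3[\frac{|\alpha|}{6}(\Delta x)^2(q^2+q+1)r + \frac{3}{2}|\beta|(q+1)]^{-1}$, $\varepsilon_2(q,r,\Delta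 x) = (\Delta x)^3[\frac{|\alpha|}{6}(\Delta x)^2(2q+1)r + \frac{3}{2}|\beta|]^{-1}$. $\tilde u^{(m)}_k=u(m\Delta t,k\Delta x)$, $e^{(m)}=u^{(m)}-\tilde u^{(m)}$, and the local truncation error $\tau^{(m)}$ is defined by $\delta^+_t \tilde u^{(m)}_k = -\frac{\alpha}{6}\delta^{\langle 1\rangle}_x\{(\tilde u^{(m+1)}_k)^2 + \tilde u^{(m+1)}_k \tilde u^{(m)}_k + (\tilde u^{(m)}_k)^2\} + \beta\delta^{\langle 1\rangle}_x\delta^{\langle 2\rangle}_x \mu^+_t \tilde u^{(m)}_k+\tau^{(m)}_k$. *)

theory Defs
  imports Complex_Main
begin

definition periodic_grid :: "nat \<Rightarrow> (int \<Rightarrow> real) \<Rightarrow> bool" where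
  "periodic_grid K v \<longleftrightarrow> (\<forall>k. v (k + int K) = v k)"

definition dxp :: "real \<Rightarrow> (int \<Rightarrow> real) \<Rightarrow> int \<Rightarrow> real" where
  "dxp h v k = (v (k + 1) - v k) / h"

definition dx1 :: "real \<Rightarrow> (int \<Rightarrow> real) \<Rightarrow> int \<Rightarrow> real" where
  "dx1 h v k = (v (k + 1) - v (k - 1)) / (2 * h)"

definition dx2 :: "real \<Rightarrow> (int \<Rightarrow> real) \<Rightarrow> int \<Rightarrow> real" where
  "dx2 h v k = (v (k + 1) - 2 * v k + v (k - 1)) / h ^ 2"

definition gnorm :: "nat \<Rightarrow> real \<Rightarrow> (int \<Rightarrow> real) \<Rightarrow> real" where
  "gnorm K h v = sqrt (\<Sum>k = 1..int K. (v k) ^ 2 * h)"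

definition supnorm :: "nat \<Rightarrow> (int \<Rightarrow> real) \<Rightarrow> real" where
  "supnorm K v = Max ((\<lambda>k. \<bar>v k\<bar>) ` {1..int K})"

definition h1norm :: "nat \<Rightarrow> real \<Rightarrow> (int \<Rightarrow> real) \<Rightarrow> real" where
  "h1norm K h v = sqrt ((gnorm K h v) ^ 2 + (gnorm K h (dxp h v)) ^ 2)"

text \<open>Right-hand side of the scheme, with w = new step, v = old step.\<close>
definition scheme_rhs :: "real \<Rightarrow> real \<Rightarrow> real \<Rightarrow> (int \<Rightarrow> real) \<Rightarrow> (int \<Rightarrow> real) \<Rightarrow> int \<Rightarrow> real" where
  "scheme_rhs \<alpha> \<beta> h w v k =
     - (\<alpha> / 6) * dx1 h (\<lambda>j. (w j) ^ 2 + w j * v j + (v j) ^ 2) k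
     + \<beta> * dx1 h (dx2 h (\<lambda>j. (w j + v j) / 2)) k"

definition solves_step :: "real \<Rightarrow> real \<Rightarrow> real \<Rightarrow> real \<Rightarrow> (int \<Rightarrow> real) \<Rightarrow> (int \<Rightarrow> real) \<Rightarrow> bool" where
  "solves_step \<alpha> \<beta> dt h v w \<longleftrightarrow> (\<forall>k. (w k - v k) / dt = scheme_rhs \<alpha> \<beta> h w v k)"

definition eps1 :: "real \<Rightarrow> real \<Rightarrow> real \<Rightarrow> real \<Rightarrow> real \<Rightarrow> real" where
  "eps1 \<alpha> \<beta> q r h = (q - 1) * h ^ 3 /
     (\<bar>\<alpha>\<bar> / 6 * h ^ 2 * (q ^ 2 + q + 1) * r + 3 / 2 * \<bar>\<beta>\<bar> * (q + 1))"

definition eps2 :: "real \<Rightarrow> real \<Rightarrow> real \<Rightarrow> real \<Rightarrow> real \<Rightarrow> real" where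
  "eps2 \<alpha> \<beta> q r h = h ^ 3 /
     (\<bar>\<alpha>\<bar> / 6 * h ^ 2 * (2 * q + 1) * r + 3 / 2 * \<bar>\<beta>\<bar>)"

definition usamp :: "(real \<Rightarrow> real \<Rightarrow> real) \<Rightarrow> real \<Rightarrow> real \<Rightarrow> nat \<Rightarrow> int \<Rightarrow> real" where
  "usamp u dt h m k = u (real m * dt) (real_of_int k * h)"

definition trunc_err :: "real \<Rightarrow> real \<Rightarrow> (real \<Rightarrow> real \<Rightarrow> real) \<Rightarrow> real \<Rightarrow> real \<Rightarrow> nat \<Rightarrow> int \<Rightarrow> real" where
  "trunc_err \<alpha> \<beta> u dt h m k =
     (usamp u dt h (Suc m) k - usamp u dt h m k) / dt
     - scheme_rhs \<alpha> \<beta> h (usamp u dt h (Suc m)) (usamp u dt h m) k"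

end

theory Submission
  imports Defs
begin


lemma tele: "(\<Sum>k=1..int n. g (k+1) - g k) = g (int n + 1) - (g 1 :: real)"
proof (induction n)
  case 0 then show ?case by simp
next
  case (Suc n)
  have "{1..int (Suc n)} = insert (int n + 1) {1..int n}" by auto
  then show ?case using Suc by simp
qed

lemma per_shift:
  assumes "periodic_grid K g"
  shows "(\<Sum>k=1..int K. (g (k+1) :: real)) = (\<Sum>k=1..int K. g k)"
proof -
  have "g (1 + int K) = g 1" using assms unfolding periodic_grid_def by blast
  then have "(\<Sum>k=1..int K. g (k+1) - g k) = 0" using tele[of g K] by (simp add: add.commute)
  then show ?thesis by (simp add: sum_subtractf)
qed

lemma per_shift_m:
  assumes "periodic_grid K g"
  shows "(\<Sum>k=1..int K. (g (k-1) :: real)) = (\<Sum>k=1..int K. g k)"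
proof -
  have "periodic_grid K (\<lambda>k. g (k - 1))" using assms unfolding periodic_grid_def
    by (metis add.commute add_diff_eq)
  from per_shift[OF this] show ?thesis by simp
qed

lemma per_sub1: "periodic_grid K g \<Longrightarrow> (\<Sum>k=1..int K. (g (k+1) - g k :: real)) = 0"
  by (simp add: sum_subtractf per_shift)
lemma per_sub2: "periodic_grid K g \<Longrightarrow> (\<Sum>k=1..int K. (g k - g (k - 1) :: real)) = 0"
  by (simp add: sum_subtractf per_shift_m)

lemma per_p1: "periodic_grid K g \<Longrightarrow> periodic_grid K (\<lambda>k. g (k+1))"
  unfolding periodic_grid_def by (metis add.commute add.left_commute)
lemma per_m1: "periodic_grid K g \<Longrightarrow> periodic_grid K (\<lambda>k. g (k-1))"
  unfolding periodic_grid_def by (metis add.commute add_diff_eq)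
lemma per_op: "periodic_grid K g \<Longrightarrow> periodic_grid K f \<Longrightarrow> periodic_grid K (\<lambda>k. F (f k) (g k))"
  unfolding periodic_grid_def by simp
lemma per_op1: "periodic_grid K f \<Longrightarrow> periodic_grid K (\<lambda>k. F (f k))"
  unfolding periodic_grid_def by simp

lemma per_dx1: "periodic_grid K f \<Longrightarrow> periodic_grid K (dx1 h f)"
  unfolding dx1_def using per_p1[of K f] per_m1[of K f] unfolding periodic_grid_def by simp
lemma per_dx2: "periodic_grid K f \<Longrightarrow> periodic_grid K (dx2 h f)"
  unfolding dx2_def using per_p1[of K f] per_m1[of K f] unfolding periodic_grid_def by simp

lemma sbp:
  fixes f p :: "int \<Rightarrow> real"
  assumes "periodic_grid K f" "periodic_grid K p"
  shows "(\<Sum>k=1..int K. dx1 h f k * p k) = - (\<Sum>k=1..int K. f k * dx1 h p k)"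
proof -
  have pa: "periodic_grid K (\<lambda>k. f k * p (k - 1))"
    using per_op[OF per_m1[OF assms(2)] assms(1), of "(*)"] by simp
  have pb: "periodic_grid K (\<lambda>k. f k * p (k + 1))"
    using per_op[OF per_p1[OF assms(2)] assms(1), of "(*)"] by simp
  have 1: "(\<Sum>k=1..int K. f (k+1) * p k) = (\<Sum>k=1..int K. f k * p (k - 1))"
    using per_shift[OF pa] by simp
  have 2: "(\<Sum>k=1..int K. f (k - 1) * p k) = (\<Sum>k=1..int K. f k * p (k + 1))"
    using per_shift_m[OF pb] by simp
  have "(\<Sum>k=1..int K. dx1 h f k * p k) = ((\<Sum>k=1..int K. f (k+1) * p k) - (\<Sum>k=1..int K. f (k - 1) * p k)) / (2*h)"
    unfolding dx1_def by (simp add: sum_divide_distrib[symmetric] sum_subtractf[symmetric] algebra_simps)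
  also have "\<dots> = ((\<Sum>k=1..int K. f k * p (k - 1)) - (\<Sum>k=1..int K. f k * p (k + 1))) / (2*h)"
    using 1 2 by simp
  also have "\<dots> = - (((\<Sum>k=1..int K. f k * p (k + 1)) - (\<Sum>k=1..int K. f k * p (k - 1))) / (2*h))"
    by (simp add: diff_divide_distrib)
  also have "\<dots> = - (\<Sum>k=1..int K. f k * dx1 h p k)"
    unfolding dx1_def by (simp add: sum_divide_distrib[symmetric] sum_subtractf[symmetric] algebra_simps)
  finally show ?thesis .
qed

lemma skew:
  fixes p :: "int \<Rightarrow> real"
  assumes "periodic_grid K p" "h > 0"
  shows "(\<Sum>k=1..int K. dx1 h (dx2 h p) k * p k) = 0"
proof -
  define G where "G = (\<lambda>k. (p k)^2)"
  define H where "H = (\<lambda>k. p k * p (k - 1))"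
  have pG: "periodic_grid K G" unfolding G_def using per_op1[OF assms(1), of "\<lambda>x. x^2"] by simp
  have pH: "periodic_grid K H" unfolding H_def using per_op[OF per_m1[OF assms(1)] assms(1), of "(*)"] by simp
  have pw: "dx2 h p k * dx1 h p k = ((G (k+1) - G k) + (G k - G (k - 1)) - 2 * (H (k+1) - H k)) / (2*h^3)" for k
    unfolding dx1_def dx2_def G_def H_def using assms(2) by (simp add: field_simps power2_eq_square power3_eq_cube)
  have "(\<Sum>k=1..int K. dx2 h p k * dx1 h p k) = ((\<Sum>k=1..int K. G (k+1) - G k) + (\<Sum>k=1..int K. G k - G (k - 1)) - 2 * (\<Sum>k=1..int K. H (k+1) - H k)) / (2*h^3)"
    unfolding pw by (simp add: sum_divide_distrib[symmetric] sum.distrib sum_subtractf sum_distrib_left)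
  also have "\<dots> = 0" using per_sub1[OF pG] per_sub2[OF pG] per_sub1[OF pH] by simp
  finally have "(\<Sum>k=1..int K. dx2 h p k * dx1 h p k) = 0" .
  then show ?thesis using sbp[OF per_dx2[OF assms(1)] assms(1), of h] by simp
qed



lemma per_nat: "periodic_grid K v \<Longrightarrow> v (k + int n * int K) = v k"
proof (induction n arbitrary: k)
  case 0 then show ?case by simp
next
  case (Suc n)
  have "v (k + int (Suc n) * int K) = v ((k + int n * int K) + int K)" by (simp add: algebra_simps)
  also have "\<dots> = v (k + int n * int K)" using Suc.prems unfolding periodic_grid_def by blast
  finally show ?case using Suc by simp
qed

lemma per_int: "periodic_grid K v \<Longrightarrow> v (k + j * int K) = v k"
proof (cases "j \<ge> 0")
  case True
  assume "periodic_grid K v"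
  then show ?thesis using per_nat[of K v k "nat j"] True by simp
next
  case False
  assume p: "periodic_grid K v"
  have "v ((k + j * int K) + int (nat (-j)) * int K) = v (k + j * int K)" using per_nat[OF p] by blast
  moreover have e: "(k + j * int K) + int (nat (-j)) * int K = k" using False by simp
  ultimately show ?thesis by (simp only: e)
qed

lemma per_bound:
  assumes "periodic_grid K v" "K > 0"
  shows "\<bar>v k\<bar> \<le> supnorm K v"
proof -
  define k' where "k' = (k - 1) mod int K + 1"
  have b1: "(k-1) mod int K < int K" "(k-1) mod int K \<ge> 0" using assms(2) by simp_all
  have k'in: "k' \<in> {1..int K}" unfolding k'_def using b1 by simp
  have "k = k' + ((k - 1) div int K) * int K" unfolding k'_def by simp
  then have "v k = v k'" using per_int[OF assms(1)] by metis
  moreover have "\<bar>v k'\<bar> \<le> supnorm K v" unfolding supnorm_def using k'in by (intro Max_ge) auto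
  ultimately show ?thesis by simp
qed

lemma gnorm_sq: "h > 0 \<Longrightarrow> (gnorm K h v)^2 = (\<Sum>k=1..int K. (v k)^2 * h)"
  unfolding gnorm_def by (simp add: sum_nonneg)

lemma h1norm_sq: "h > 0 \<Longrightarrow> (h1norm K h v)^2 = (\<Sum>k=1..int K. (v k)^2 * h) + (\<Sum>k=1..int K. (dxp h v k)^2 * h)"
  unfolding h1norm_def by (simp add: gnorm_sq sum_nonneg add_nonneg_nonneg)

lemma pw_nonlin:
  fixes \<alpha> q r C1 w v wt vt d :: real
  assumes "\<bar>w\<bar> \<le> q*r" "\<bar>v\<bar> \<le> r" "\<bar>wt\<bar> \<le> r" "\<bar>vt\<bar> \<le> r" "q > 1" "r \<ge> 0"
    and C1: "C1 = max (3 * \<bar>\<alpha>\<bar> * (2 * q ^ 2 + 1) * r ^ 2 + 1) (\<bar>\<alpha>\<bar> / 2)"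
  shows "(\<alpha>/3) * ((w^2 + w*v + v^2) - (wt^2 + wt*vt + vt^2)) * d
     \<le> (C1 - 1)/2 * ((w - wt)^2 + (v - vt)^2) + C1 * d^2"
proof -
  define f where "f = (w^2 + w*v + v^2) - (wt^2 + wt*vt + vt^2)"
  define x where "x = w - wt"
  define y where "y = v - vt"
  define A where "A = (q+2)*r"
  define B where "B = 3*r"
  have fe: "f = x*(w+wt+v) + y*(wt+v+vt)" unfolding f_def x_def y_def by algebra
  have a1: "\<bar>w+wt+v\<bar> \<le> A" unfolding A_def using assms(1-4) by (simp add: algebra_simps)
  have a2: "\<bar>wt+v+vt\<bar> \<le> B" unfolding B_def using assms(2-4) unfolding abs_le_iff by linarith
  have "\<bar>x*(w+wt+v)\<bar> \<le> \<bar>x\<bar>*A" unfolding abs_mult by (rule mult_left_mono[OF a1]) simp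
  moreover have "\<bar>y*(wt+v+vt)\<bar> \<le> \<bar>y\<bar>*B" unfolding abs_mult by (rule mult_left_mono[OF a2]) simp
  moreover have "\<bar>x*(w+wt+v) + y*(wt+v+vt)\<bar> \<le> \<bar>x*(w+wt+v)\<bar> + \<bar>y*(wt+v+vt)\<bar>" by (rule abs_triangle_ineq)
  ultimately have "\<bar>f\<bar> \<le> \<bar>x\<bar>*A + \<bar>y\<bar>*B" unfolding fe by linarith
  then have "f^2 \<le> (\<bar>x\<bar>*A + \<bar>y\<bar>*B)^2"
    by (metis abs_ge_zero abs_le_square_iff abs_of_nonneg order_trans)
  also have "\<dots> \<le> (A^2 + B^2) * (x^2 + y^2)"
  proof -
    have "0 \<le> (\<bar>x\<bar>*B - \<bar>y\<bar>*A)^2" by simp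
    then show ?thesis by (simp add: power2_eq_square algebra_simps)
  qed
  finally have f2: "f^2 \<le> (A^2 + B^2) * (x^2 + y^2)" .
  have "0 \<le> 3 * \<bar>\<alpha>\<bar> * (2 * q ^ 2 + 1) * r ^ 2" by simp
  then have C1ge1: "C1 \<ge> 1" unfolding C1 by linarith
  have C1a: "C1 \<ge> \<bar>\<alpha>\<bar>/2" unfolding C1 by simp
  have C1b: "C1 - 1 \<ge> 3 * \<bar>\<alpha>\<bar> * (2 * q ^ 2 + 1) * r ^ 2" unfolding C1 by simp
  have "C1 * (C1 - 1) \<ge> (\<bar>\<alpha>\<bar>/2) * (3 * \<bar>\<alpha>\<bar> * (2 * q ^ 2 + 1) * r ^ 2)"
    by (rule mult_mono[OF C1a C1b]) (use C1ge1 in auto)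
  moreover have "\<alpha>^2 * (A^2 + B^2) \<le> 27 * \<alpha>^2 * (2*q^2+1) * r^2"
  proof -
    have "A^2 + B^2 \<le> 27 * (2*q^2+1) * r^2"
    proof -
      have "A^2 + B^2 = ((q+2)^2 + 9) * r^2" unfolding A_def B_def by (simp add: power2_eq_square algebra_simps)
      moreover have "(q+2)^2 + 9 \<le> 27 * (2*q^2+1)" 
      proof -
        have "q*q \<ge> q" using assms(5) by simp
        moreover have "(q+2)^2 + 9 = q*q + 4*q + 13" by (simp add: power2_eq_square algebra_simps)
        moreover have "27*(2*q^2+1) = 54*(q*q) + 27" by (simp add: power2_eq_square algebra_simps)
        ultimately show ?thesis using assms(5) by linarith
      qed
      ultimately show ?thesis by (simp add: mult_right_mono)
    qed
    from mult_left_mono[OF this, of "\<alpha>^2"] show ?thesis by (simp add: algebra_simps)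
  qed
  moreover have "(\<bar>\<alpha>\<bar>/2) * (3 * \<bar>\<alpha>\<bar> * (2 * q ^ 2 + 1) * r ^ 2) = 3/2 * (\<alpha>^2 * ((2*q^2+1) * r^2))"
  proof -
    have g: "(a/2) * (3 * a * Z) = 3/2 * ((a*a) * Z)" for a Z :: real by (simp add: field_simps)
    have sq: "\<bar>\<alpha>\<bar> * \<bar>\<alpha>\<bar> = \<alpha>^2" by (simp add: power2_eq_square)
    show ?thesis using g[of "\<bar>\<alpha>\<bar>" "(2 * q ^ 2 + 1) * r ^ 2"] unfolding sq by (simp add: mult.assoc)
  qed
  moreover have "27 * \<alpha>^2 * (2*q^2+1) * r^2 = 27 * (\<alpha>^2 * ((2*q^2+1) * r^2))" by (simp add: mult.assoc)
  moreover have "18 * C1 * (C1 - 1) = 18 * (C1 * (C1 - 1))" by simp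
  ultimately have key: "\<alpha>^2 * (A^2 + B^2) \<le> 18 * C1 * (C1 - 1)"
    by linarith
  have "(\<alpha>/3) * f * d \<le> \<bar>\<alpha>\<bar>/3 * \<bar>f\<bar> * \<bar>d\<bar>"
    by (simp add: abs_mult[symmetric] abs_ge_self del: abs_mult)
  also have "\<dots> \<le> \<alpha>^2 * f^2 / (36 * C1) + C1 * d^2"
  proof -
    have "0 \<le> (\<bar>\<alpha>\<bar>/3 * \<bar>f\<bar> - 2*C1*\<bar>d\<bar>)^2" by simp
    then have "4*C1*(\<bar>\<alpha>\<bar>/3 * \<bar>f\<bar> * \<bar>d\<bar>) \<le> (\<bar>\<alpha>\<bar>/3 * \<bar>f\<bar>)^2 + 4*C1^2*d^2"
      by (simp add: power2_eq_square algebra_simps)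
    then show ?thesis using C1ge1
      by (simp add: field_simps power2_eq_square abs_mult_self_eq) 
  qed
  also have "\<alpha>^2 * f^2 / (36 * C1) \<le> (C1-1)/2 * (x^2+y^2)"
  proof -
    have "\<alpha>^2 * f^2 \<le> \<alpha>^2 * ((A^2 + B^2) * (x^2 + y^2))" using f2 by (simp add: mult_left_mono)
    also have "\<dots> \<le> 18 * C1 * (C1 - 1) * (x^2+y^2)" using key
      by (metis mult.assoc mult_right_mono zero_le_power2 add_nonneg_nonneg)
    finally show ?thesis using C1ge1 by (simp add: field_simps)
  qed
  finally show ?thesis unfolding f_def x_def y_def by simp
qed



lemma scheme_diff:
  assumes "h \<noteq> 0"
  shows "scheme_rhs \<alpha> \<beta> h w v k - scheme_rhs \<alpha> \<beta> h wt vt k =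
    - (\<alpha>/6) * dx1 h (\<lambda>j. ((w j)^2 + w j * v j + (v j)^2) - ((wt j)^2 + wt j * vt j + (vt j)^2)) k
    + \<beta> * dx1 h (dx2 h (\<lambda>j. ((w j - wt j) + (v j - vt j))/2)) k"
proof -
  have l1: "dx1 h f k - dx1 h g k = dx1 h (\<lambda>j. f j - g j) k" for f g :: "int \<Rightarrow> real" and k
    unfolding dx1_def by (simp add: diff_divide_distrib)
  have l2: "(\<lambda>j. dx2 h f j - dx2 h g j) = dx2 h (\<lambda>j. f j - g j)" for f g :: "int \<Rightarrow> real"
    unfolding dx2_def by (rule ext, subst diff_divide_distrib[symmetric], rule arg_cong[where f="\<lambda>x. x / h^2"], simp add: algebra_simps)
  have l3: "(\<lambda>j. (w j + v j)/2 - (wt j + vt j)/2) = (\<lambda>j. ((w j - wt j) + (v j - vt j))/2)"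
    by (rule ext) (simp add: field_simps)
  have "scheme_rhs \<alpha> \<beta> h w v k - scheme_rhs \<alpha> \<beta> h wt vt k =
     - (\<alpha>/6) * (dx1 h (\<lambda>j. (w j)^2 + w j * v j + (v j)^2) k - dx1 h (\<lambda>j. (wt j)^2 + wt j * vt j + (vt j)^2) k)
     + \<beta> * (dx1 h (dx2 h (\<lambda>j. (w j + v j) / 2)) k - dx1 h (dx2 h (\<lambda>j. (wt j + vt j) / 2)) k)"
    unfolding scheme_rhs_def by (simp add: algebra_simps)
  also have "\<dots> = - (\<alpha>/6) * dx1 h (\<lambda>j. ((w j)^2 + w j * v j + (v j)^2) - ((wt j)^2 + wt j * vt j + (vt j)^2)) k
    + \<beta> * dx1 h (\<lambda>j. dx2 h (\<lambda>j. (w j + v j) / 2) j - dx2 h (\<lambda>j. (wt j + vt j) / 2) j) k"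
    by (simp only: l1)
  also have "\<dots> = - (\<alpha>/6) * dx1 h (\<lambda>j. ((w j)^2 + w j * v j + (v j)^2) - ((wt j)^2 + wt j * vt j + (vt j)^2)) k
    + \<beta> * dx1 h (dx2 h (\<lambda>j. ((w j - wt j) + (v j - vt j))/2)) k"
    by (simp only: l2 l3)
  finally show ?thesis .
qed

lemma per_dxp: "periodic_grid K f \<Longrightarrow> periodic_grid K (dxp h f)"
  unfolding dxp_def using per_p1[of K f] unfolding periodic_grid_def by simp

lemma d_bound:
  assumes "periodic_grid K p" "h > 0"
  shows "(\<Sum>k=1..int K. (dx1 h p k)^2) \<le> (\<Sum>k=1..int K. (dxp h p k)^2)"
proof -
  have "(dx1 h p k)^2 \<le> ((dxp h p k)^2 + (dxp h p (k-1))^2)/2" for k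
  proof -
    have "dx1 h p k = (dxp h p k + dxp h p (k-1))/2" unfolding dx1_def dxp_def using assms(2)
      by (simp add: field_simps)
    moreover have "((a+b)/2)^2 \<le> (a^2+b^2)/2" for a b :: real
    proof -
      have "0 \<le> (a-b)^2" by simp
      then show ?thesis by (simp add: power2_eq_square field_simps)
    qed
    ultimately show ?thesis by metis
  qed
  then have "(\<Sum>k=1..int K. (dx1 h p k)^2) \<le> (\<Sum>k=1..int K. ((dxp h p k)^2 + (dxp h p (k-1))^2)/2)"
    by (rule sum_mono)
  also have "\<dots> = ((\<Sum>k=1..int K. (dxp h p k)^2) + (\<Sum>k=1..int K. (dxp h p (k-1))^2))/2"
    by (simp add: sum_divide_distrib[symmetric] sum.distrib)
  also have "(\<Sum>k=1..int K. (dxp h p (k-1))^2) = (\<Sum>k=1..int K. (dxp h p k)^2)"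
    using per_shift_m[OF per_op1[OF per_dxp[OF assms(1)], of "\<lambda>x. x^2"]] by simp
  finally show ?thesis by simp
qed



lemma lin3: "(\<Sum>k\<in>S. x * (a*F k + b*G k - c*H k)) = x*(a*sum F S + b*sum G S - c*sum H S)"
  for x a b c :: real
proof -
  have "(\<Sum>k\<in>S. x * (a*F k + b*G k - c*H k)) = (\<Sum>k\<in>S. (x*a)*F k + (x*b)*G k - (x*c)*H k)"
    by (simp add: algebra_simps)
  also have "\<dots> = (x*a)*sum F S + (x*b)*sum G S - (x*c)*sum H S"
    by (simp add: sum_subtractf sum.distrib sum_distrib_left)
  finally show ?thesis by (simp add: algebra_simps)
qed
lemma lin2: "(\<Sum>k\<in>S. (a*F k - b*G k) * x) = x*(a*sum F S - b*sum G S)"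
  for x a b :: real
proof -
  have "(\<Sum>k\<in>S. (a*F k - b*G k) * x) = (\<Sum>k\<in>S. (x*a)*F k - (x*b)*G k)"
    by (simp add: algebra_simps)
  also have "\<dots> = (x*a)*sum F S - (x*b)*sum G S"
    by (simp add: sum_subtractf sum_distrib_left)
  finally show ?thesis by (simp add: algebra_simps)
qed

lemma lin4: "c * x * (\<Sum>k\<in>S. (F k + G k)/2) = c/2 * ((\<Sum>k\<in>S. F k * x) + (\<Sum>k\<in>S. G k * x))"
  for c x :: real
proof -
  have h1: "(\<Sum>k\<in>S. (F k + G k)/2) = (sum F S + sum G S)/2" by (simp add: sum.distrib sum_divide_distrib[symmetric])
  have h2: "(\<Sum>k\<in>S. F k * x) = sum F S * x" "(\<Sum>k\<in>S. G k * x) = sum G S * x" by (simp_all add: sum_distrib_right)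
  show ?thesis unfolding h1 h2 by (simp add: field_simps)
qed

theorem lemma3p4:
  fixes L T \<alpha> \<beta> q r c0 :: real
    and K M M0 :: nat
    and u ux uxx uxxx :: "real \<Rightarrow> real \<Rightarrow> real"
    and U :: "nat \<Rightarrow> int \<Rightarrow> real"
  defines "dx \<equiv> L / real K"
    and "dt \<equiv> T / real M"
  assumes L_pos: "L > 0" and K_pos: "K > 0" and T_pos: "T > 0"
    and beta_nz: "\<beta> \<noteq> 0"
    and q_gt: "q > 1" and M0_lt: "M0 < M"
    and u_periodic: "\<forall>t\<in>{0..T}. \<forall>x. u t (x + L) = u t x"
    and ux_deriv: "\<forall>t\<in>{0..T}. \<forall>x. ((\<lambda>y. u t y) has_real_derivative ux t x) (at x)"
    and uxx_deriv: "\<forall>t\<in>{0..T}. \<forall>x. ((\<lambda>y. ux t y) has_real_derivative uxx t x) (at x)"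
    and uxxx_deriv: "\<forall>t\<in>{0..T}. \<forall>x. ((\<lambda>y. uxx t y) has_real_derivative uxxx t x) (at x)"
    and pde: "\<forall>t\<in>{0..T}. \<forall>x. ((\<lambda>s. u s x) has_real_derivative
                 (- \<alpha> * u t x * ux t x + \<beta> * uxxx t x)) (at t within {0..T})"
    and r_bound: "\<exists>s<r. \<forall>t\<in>{0..T}. \<forall>x. \<bar>u t x\<bar> \<le> s"
    and init: "\<forall>k. U 0 k = u 0 (real_of_int k * dx)"
    and U_periodic: "\<forall>n\<le>Suc M0. periodic_grid K (U n)"
    and U_scheme: "\<forall>n\<le>M0. solves_step \<alpha> \<beta> dt dx (U n) (U (Suc n))"
    and U_bound: "\<forall>m\<le>M0. supnorm K (U m) \<le> r"
    and dt_small: "dt < min (eps1 \<alpha> \<beta> q r dx) (eps2 \<alpha> \<beta> q r dx)"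
    and U_last: "supnorm K (U (Suc M0)) \<le> q * r"
    and c0_pos: "c0 > 0"
    and tau_bound: "\<forall>m\<le>M0.
        gnorm K dx (trunc_err \<alpha> \<beta> u dt dx m) \<le> c0 * (dt ^ 2 + dx ^ 2) \<and>
        gnorm K dx (dxp dx (trunc_err \<alpha> \<beta> u dt dx m)) \<le> c0 * (dt ^ 2 + dx ^ 2)"
  shows "\<forall>m\<le>M0.
    let e = (\<lambda>n k. U n k - usamp u dt dx n k);
        C1 = max (3 * \<bar>\<alpha>\<bar> * (2 * q ^ 2 + 1) * r ^ 2 + 1) (\<bar>\<alpha>\<bar> / 2)
    in ((gnorm K dx (e (Suc m))) ^ 2 - (gnorm K dx (e m)) ^ 2) / dt
       \<le> C1 * (((h1norm K dx (e (Suc m))) ^ 2 + (h1norm K dx (e m)) ^ 2) / 2)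
         + c0 ^ 2 * (dt ^ 2 + dx ^ 2) ^ 2"
proof -
  have Mpos: "M > 0" using M0_lt by simp
  have dxpos: "dx > 0" unfolding dx_def using L_pos K_pos by simp
  have dtpos: "dt > 0" unfolding dt_def using T_pos Mpos by simp
  have KL: "real K * dx = L" unfolding dx_def using K_pos by simp
  obtain s where s_lt: "s < r" and s_b: "\<forall>t\<in>{0..T}. \<forall>x. \<bar>u t x\<bar> \<le> s" using r_bound by blast
  have "\<bar>u 0 0\<bar> \<le> s" using s_b T_pos by simp
  then have r_nn: "r \<ge> 0" using s_lt by linarith
  have rqr: "r \<le> q * r"
  proof -
    have "0 \<le> (q - 1) * r" using q_gt r_nn by simp
    then show ?thesis by (simp add: algebra_simps)
  qed
  have tin: "real n * dt \<in> {0..T}" if "n \<le> M" for n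
  proof -
    have "real n * dt \<le> real M * dt" using that dtpos by (simp add: mult_right_mono)
    also have "\<dots> = T" unfolding dt_def using Mpos by simp
    finally show ?thesis using dtpos by simp
  qed
  have usper: "periodic_grid K (usamp u dt dx n)" if "n \<le> M" for n
    unfolding periodic_grid_def usamp_def
  proof
    fix k
    have "real_of_int (k + int K) * dx = real_of_int k * dx + L" using KL by (simp add: algebra_simps)
    then show "u (real n * dt) (real_of_int (k + int K) * dx) = u (real n * dt) (real_of_int k * dx)"
      using u_periodic tin[OF that] by simp
  qed
  have usb: "\<bar>usamp u dt dx n k\<bar> \<le> r" if "n \<le> M" for n k
  proof -
    have "\<bar>u (real n * dt) (real_of_int k * dx)\<bar> \<le> s" using s_b tin[OF that] by blast
    then show ?thesis unfolding usamp_def using s_lt by linarith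
  qed
  show ?thesis
  proof (intro allI impI)
    fix m assume mM0: "m \<le> M0"
    define C1 where "C1 = max (3 * \<bar>\<alpha>\<bar> * (2 * q ^ 2 + 1) * r ^ 2 + 1) (\<bar>\<alpha>\<bar> / 2)"
    define w where "w = U (Suc m)"
    define v where "v = U m"
    define wt where "wt = usamp u dt dx (Suc m)"
    define vt where "vt = usamp u dt dx m"
    define E' where "E' = (\<lambda>k. w k - wt k)"
    define E where "E = (\<lambda>k. v k - vt k)"
    define p where "p = (\<lambda>j. (E' j + E j)/2)"
    define f where "f = (\<lambda>j. ((w j)^2 + w j * v j + (v j)^2) - ((wt j)^2 + wt j * vt j + (vt j)^2))"
    define \<tau> where "\<tau> = trunc_err \<alpha> \<beta> u dt dx m"
    define d where "d = dx1 dx p"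
    define X where "X = dt ^ 2 + dx ^ 2"
    have "0 \<le> 3 * \<bar>\<alpha>\<bar> * (2 * q ^ 2 + 1) * r ^ 2" by simp
    then have C1ge1: "C1 \<ge> 1" unfolding C1_def by linarith
    have pw_per: "periodic_grid K w" "periodic_grid K v" using U_periodic mM0 unfolding w_def v_def by simp_all
    have pwt: "periodic_grid K wt" "periodic_grid K vt" using usper M0_lt mM0 unfolding wt_def vt_def by simp_all
    have pE': "periodic_grid K E'" unfolding E'_def using per_op[OF pwt(1) pw_per(1), of "(-)"] by simp
    have pE: "periodic_grid K E" unfolding E_def using per_op[OF pwt(2) pw_per(2), of "(-)"] by simp
    have pp: "periodic_grid K p" unfolding p_def using per_op[OF pE pE', of "\<lambda>a b. (a+b)/2"] by simp
    have pf: "periodic_grid K f" unfolding f_def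
      using per_op[OF per_op[OF pwt(2) pwt(1), of "\<lambda>a b. a^2 + a*b + b^2"] per_op[OF pw_per(2) pw_per(1), of "\<lambda>a b. a^2 + a*b + b^2"], of "(-)"] by simp
    have wb: "\<bar>w k\<bar> \<le> q * r" for k
    proof (cases "m < M0")
      case True
      then have "supnorm K w \<le> r" using U_bound unfolding w_def by simp
      then have "\<bar>w k\<bar> \<le> r" using per_bound[OF pw_per(1) K_pos, of k] by linarith
      then show ?thesis using rqr by linarith
    next
      case False
      then have "m = M0" using mM0 by simp
      then show ?thesis using per_bound[OF pw_per(1) K_pos, of k] U_last unfolding w_def by (metis order_trans)
    qed
    have vb: "\<bar>v k\<bar> \<le> r" for k
    proof -
      have "supnorm K v \<le> r" using U_bound mM0 unfolding v_def by simp
      then show ?thesis using per_bound[OF pw_per(2) K_pos, of k] by linarith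
    qed
    have wtb: "\<bar>wt k\<bar> \<le> r" for k unfolding wt_def using usb M0_lt mM0 by simp
    have vtb: "\<bar>vt k\<bar> \<le> r" for k unfolding vt_def using usb M0_lt mM0 by simp
    have step: "(E' k - E k)/dt = - (\<alpha>/6) * dx1 dx f k + \<beta> * dx1 dx (dx2 dx p) k - \<tau> k" for k
    proof -
      have "(w k - v k)/dt = scheme_rhs \<alpha> \<beta> dx w v k" using U_scheme mM0 unfolding solves_step_def w_def v_def by simp
      moreover have "\<tau> k = (wt k - vt k)/dt - scheme_rhs \<alpha> \<beta> dx wt vt k"
        unfolding \<tau>_def trunc_err_def wt_def vt_def by simp
      moreover have "(E' k - E k)/dt = (w k - v k)/dt - (wt k - vt k)/dt" unfolding E'_def E_def
        by (simp add: diff_divide_distrib[symmetric] algebra_simps)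
      ultimately have "(E' k - E k)/dt = scheme_rhs \<alpha> \<beta> dx w v k - scheme_rhs \<alpha> \<beta> dx wt vt k - \<tau> k" by simp
      also have "\<dots> = - (\<alpha>/6) * dx1 dx f k + \<beta> * dx1 dx (dx2 dx p) k - \<tau> k"
        unfolding scheme_diff[OF dxpos[THEN less_imp_neq, symmetric]] f_def p_def E'_def E_def by simp
      finally show ?thesis .
    qed
    have "((gnorm K dx E')^2 - (gnorm K dx E)^2)/dt = (\<Sum>k=1..int K. 2 * ((E' k - E k)/dt) * p k * dx)"
    proof -
      have "((gnorm K dx E')^2 - (gnorm K dx E)^2)/dt = (\<Sum>k=1..int K. ((E' k)^2 * dx - (E k)^2 * dx) / dt)"
        using gnorm_sq[OF dxpos] by (simp add: sum_subtractf[symmetric] sum_divide_distrib[symmetric])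
      also have "\<dots> = (\<Sum>k=1..int K. 2 * ((E' k - E k)/dt) * p k * dx)"
        unfolding p_def using dtpos by (intro sum.cong) (simp_all add: field_simps power2_eq_square)
      finally show ?thesis .
    qed
    also have "\<dots> = dx * ( -(\<alpha>/3) * (\<Sum>k=1..int K. dx1 dx f k * p k) + 2 * \<beta> * (\<Sum>k=1..int K. dx1 dx (dx2 dx p) k * p k) - 2 * (\<Sum>k=1..int K. \<tau> k * p k))"
    proof -
      have "(\<Sum>k=1..int K. 2 * ((E' k - E k)/dt) * p k * dx) = (\<Sum>k=1..int K. dx * (-(\<alpha>/3) * (dx1 dx f k * p k) + (2 * \<beta>) * (dx1 dx (dx2 dx p) k * p k) - 2 * (\<tau> k * p k)))"
        by (rule sum.cong) (simp_all add: step algebra_simps)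
      then show ?thesis by (simp only: lin3)
    qed
    also have "\<dots> = dx * ( (\<alpha>/3) * (\<Sum>k=1..int K. f k * d k) - 2 * (\<Sum>k=1..int K. \<tau> k * p k))"
      unfolding d_def using sbp[OF pf pp, of dx] skew[OF pp dxpos] by simp
    also have "\<dots> = (\<Sum>k=1..int K. ((\<alpha>/3) * f k * d k - 2 * \<tau> k * p k) * dx)"
    proof -
      have "dx * ( (\<alpha>/3) * (\<Sum>k=1..int K. f k * d k) - 2 * (\<Sum>k=1..int K. \<tau> k * p k)) = (\<Sum>k=1..int K. ((\<alpha>/3) * (f k * d k) - 2 * (\<tau> k * p k)) * dx)"
        by (simp only: lin2)
      also have "\<dots> = (\<Sum>k=1..int K. ((\<alpha>/3) * f k * d k - 2 * \<tau> k * p k) * dx)"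
        by (simp add: mult.assoc)
      finally show ?thesis .
    qed
    also have "\<dots> \<le> (\<Sum>k=1..int K. (C1/2 * ((E' k)^2 + (E k)^2) + C1 * (d k)^2 + (\<tau> k)^2) * dx)"
    proof (rule sum_mono)
      fix k
      have n1: "(\<alpha>/3) * f k * d k \<le> (C1 - 1)/2 * ((E' k)^2 + (E k)^2) + C1 * (d k)^2"
        using pw_nonlin[OF wb vb wtb vtb q_gt r_nn C1_def, where d="d k"] unfolding f_def E'_def E_def by simp
      have n2: "- 2 * \<tau> k * p k \<le> (\<tau> k)^2 + ((E' k)^2 + (E k)^2)/2"
      proof -
        have "0 \<le> (\<tau> k + p k)^2" "0 \<le> (E' k - E k)^2" by simp_all
        then show ?thesis unfolding p_def by (simp add: power2_eq_square field_simps)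
      qed
      have "(\<alpha>/3) * f k * d k - 2 * \<tau> k * p k \<le> C1/2 * ((E' k)^2 + (E k)^2) + C1 * (d k)^2 + (\<tau> k)^2"
        using n1 n2 by (simp add: field_simps)
      then show "((\<alpha>/3) * f k * d k - 2 * \<tau> k * p k) * dx \<le> (C1/2 * ((E' k)^2 + (E k)^2) + C1 * (d k)^2 + (\<tau> k)^2) * dx"
        using dxpos by (simp add: mult_right_mono)
    qed
    also have "\<dots> = C1/2 * ((\<Sum>k=1..int K. (E' k)^2 * dx) + (\<Sum>k=1..int K. (E k)^2 * dx)) + C1 * dx * (\<Sum>k=1..int K. (d k)^2) + (\<Sum>k=1..int K. (\<tau> k)^2 * dx)"
      by (simp add: sum_distrib_left sum_distrib_right sum.distrib algebra_simps)
    also have "\<dots> \<le> C1/2 * ((\<Sum>k=1..int K. (E' k)^2 * dx) + (\<Sum>k=1..int K. (E k)^2 * dx)) + C1/2 * ((\<Sum>k=1..int K. (dxp dx E' k)^2 * dx) + (\<Sum>k=1..int K. (dxp dx E k)^2 * dx)) + c0^2 * X^2"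
    proof -
      have "(\<Sum>k=1..int K. (d k)^2) \<le> (\<Sum>k=1..int K. (dxp dx p k)^2)" unfolding d_def by (rule d_bound[OF pp dxpos])
      also have "\<dots> \<le> (\<Sum>k=1..int K. ((dxp dx E' k)^2 + (dxp dx E k)^2)/2)"
      proof (rule sum_mono)
        fix k
        have "dxp dx p k = (dxp dx E' k + dxp dx E k)/2" unfolding dxp_def p_def using dxpos by (simp add: field_simps)
        moreover have "((a+b)/2)^2 \<le> (a^2+b^2)/2" for a b :: real
        proof -
          have "0 \<le> (a-b)^2" by simp
          then show ?thesis by (simp add: power2_eq_square field_simps)
        qed
        ultimately show "(dxp dx p k)^2 \<le> ((dxp dx E' k)^2 + (dxp dx E k)^2)/2" by metis
      qed
      finally have "C1 * dx * (\<Sum>k=1..int K. (d k)^2) \<le> C1 * dx * (\<Sum>k=1..int K. ((dxp dx E' k)^2 + (dxp dx E k)^2)/2)"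
        using C1ge1 dxpos by (simp add: mult_left_mono)
      also have "\<dots> = C1/2 * ((\<Sum>k=1..int K. (dxp dx E' k)^2 * dx) + (\<Sum>k=1..int K. (dxp dx E k)^2 * dx))"
        by (rule lin4)
      finally have A: "C1 * dx * (\<Sum>k=1..int K. (d k)^2) \<le> \<dots>" .
      have "(\<Sum>k=1..int K. (\<tau> k)^2 * dx) = (gnorm K dx \<tau>)^2" using gnorm_sq[OF dxpos] by simp
      also have "\<dots> \<le> (c0 * X)^2"
      proof (rule power_mono)
        have "0 \<le> (\<Sum>k=1..int K. (\<tau> k)^2 * dx)" using dxpos by (intro sum_nonneg) simp
        then show "0 \<le> gnorm K dx \<tau>" unfolding gnorm_def by simp
        show "gnorm K dx \<tau> \<le> c0 * X" using tau_bound mM0 unfolding \<tau>_def X_def by blast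
      qed
      finally have B: "(\<Sum>k=1..int K. (\<tau> k)^2 * dx) \<le> c0^2 * X^2" by (simp add: power_mult_distrib)
      show ?thesis using A B by simp
    qed
    also have "\<dots> = C1 * (((h1norm K dx E')^2 + (h1norm K dx E)^2)/2) + c0^2 * X^2"
      using h1norm_sq[OF dxpos] by (simp add: algebra_simps)
    finally have fin: "((gnorm K dx E')^2 - (gnorm K dx E)^2)/dt \<le> C1 * (((h1norm K dx E')^2 + (h1norm K dx E)^2)/2) + c0^2 * X^2" .
    show "let e = (\<lambda>n k. U n k - usamp u dt dx n k);
        C1 = max (3 * \<bar>\<alpha>\<bar> * (2 * q ^ 2 + 1) * r ^ 2 + 1) (\<bar>\<alpha>\<bar> / 2)
    in ((gnorm K dx (e (Suc m))) ^ 2 - (gnorm K dx (e m)) ^ 2) / dt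
       \<le> C1 * (((h1norm K dx (e (Suc m))) ^ 2 + (h1norm K dx (e m)) ^ 2) / 2)
         + c0 ^ 2 * (dt ^ 2 + dx ^ 2) ^ 2"
      using fin unfolding Let_def C1_def E'_def E_def w_def v_def wt_def vt_def X_def by simp
  qed
qed


end
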